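(* Let $R$ be a $K$-ring with a degree function such that $R\neq K$. Then every connected component of the projective line $\mathbb{P}(R)$ has infinite diameter.
   Context: A ring $R$ (associative, with $1$, unit group $R^*$) is a $K$-ring with a degree function if $K:=R^*\cup\{0\}$ is a (not necessarily commutative) field and there is a function $\deg:R\to\{-\infty\}\cup\{0,1,2,\dots\}$ with: $\deg a=-\infty$ iff $a=0$; $\deg a=0$ iff $a\in R^*$; $\deg(a+b)\le\max\{\deg a,\deg b\}$; $\deg(ab)=\deg a+\deg b$, for all $a,b\in R$. A pair $(a,b)\in R^2$ is admissible if it is the first row of an invertible $2\times2$ matrix over $R$; $\mathbb{P}(R)$ is the set of cyclic submodules $R(a,b)$ of the left module $R^2$ with $(a,b)$ admissible. Two points $R(a,b)$, $R(c,d)$ are distant iff $\begin{pmatrix}a&b\\c&d\end{pmatrix}$ is invertible; connected components and diameter (supremum of path distances within a component) refer to the graph on $\mathbb{P}(R)$ whose edges are pairs of distant points. *)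

theory Defs
  imports Main
begin

definition unit_R :: "'a::ring_1 \<Rightarrow> bool" where
  "unit_R a \<longleftrightarrow> (\<exists>b. a * b = 1 \<and> b * a = 1)"

definition K_set :: "'a::ring_1 set" where
  "K_set = {a. unit_R a} \<union> {0}"

(* K is a (skew) field: a subring with 0 \<noteq> 1 (nonzero elements are invertible by construction) *)
definition K_is_field :: "'a::ring_1 itself \<Rightarrow> bool" where
  "K_is_field _ \<longleftrightarrow> (0::'a) \<noteq> 1 \<and>
     (\<forall>a\<in>(K_set::'a set). \<forall>b\<in>K_set. a + b \<in> K_set \<and> a * b \<in> K_set) \<and>
     (\<forall>a\<in>(K_set::'a set). - a \<in> K_set)"

(* Degree function; deg a for a = 0 stands for -\<infinity>, so the values deg 0 are irrelevant
   and the axioms are written out with the -\<infinity> cases resolved. *)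
definition degree_function :: "('a::ring_1 \<Rightarrow> nat) \<Rightarrow> bool" where
  "degree_function deg \<longleftrightarrow>
     (\<forall>a. a \<noteq> 0 \<longrightarrow> (deg a = 0 \<longleftrightarrow> unit_R a)) \<and>
     (\<forall>a b. a \<noteq> 0 \<longrightarrow> b \<noteq> 0 \<longrightarrow> a * b \<noteq> 0 \<and> deg (a * b) = deg a + deg b) \<and>
     (\<forall>a b. a \<noteq> 0 \<longrightarrow> b \<noteq> 0 \<longrightarrow> a + b \<noteq> 0 \<longrightarrow> deg (a + b) \<le> max (deg a) (deg b))"

definition K_ring_with_degree :: "('a::ring_1 \<Rightarrow> nat) \<Rightarrow> bool" where
  "K_ring_with_degree deg \<longleftrightarrow> K_is_field TYPE('a) \<and> degree_function deg"

definition invertible2 :: "'a::ring_1 \<Rightarrow> 'a \<Rightarrow> 'a \<Rightarrow> 'a \<Rightarrow> bool" where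
  "invertible2 a b c d \<longleftrightarrow> (\<exists>a' b' c' d'.
      a * a' + b * c' = 1 \<and> a * b' + b * d' = 0 \<and>
      c * a' + d * c' = 0 \<and> c * b' + d * d' = 1 \<and>
      a' * a + b' * c = 1 \<and> a' * b + b' * d = 0 \<and>
      c' * a + d' * c = 0 \<and> c' * b + d' * d = 1)"

definition admissible :: "'a::ring_1 \<Rightarrow> 'a \<Rightarrow> bool" where
  "admissible a b \<longleftrightarrow> (\<exists>c d. invertible2 a b c d)"

definition cyc :: "'a::ring_1 \<Rightarrow> 'a \<Rightarrow> ('a \<times> 'a) set" where
  "cyc a b = {(r * a, r * b) | r. True}"

definition proj_line :: "('a::ring_1 \<times> 'a) set set" where
  "proj_line = {cyc a b | a b. admissible a b}"

definition distant :: "('a::ring_1 \<times> 'a) set \<Rightarrow> ('a \<times> 'a) set \<Rightarrow> bool" where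
  "distant p q \<longleftrightarrow> (\<exists>a b c d. p = cyc a b \<and> q = cyc c d \<and> invertible2 a b c d)"

definition components :: "('a::ring_1 \<times> 'a) set set set" where
  "components = {{q. distant\<^sup>*\<^sup>* p q} | p. p \<in> proj_line}"

end

theory Submission imports Defs begin

fun mm :: "'a::ring_1 \<times> 'a \<times> 'a \<times> 'a \<Rightarrow> 'a \<times> 'a \<times> 'a \<times> 'a \<Rightarrow> 'a \<times> 'a \<times> 'a \<times> 'a" where
  "mm (a,b,c,d) (e,f,g,h) = (a*e+b*g, a*f+b*h, c*e+d*g, c*f+d*h)"

definition I2 :: "'a::ring_1 \<times> 'a \<times> 'a \<times> 'a" where "I2 = (1,0,0,1)"

definition inv2 :: "'a::ring_1 \<times> 'a \<times> 'a \<times> 'a \<Rightarrow> bool" where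
  "inv2 M \<longleftrightarrow> (\<exists>N. mm M N = I2 \<and> mm N M = I2)"

lemma mm_assoc: "mm (mm A B) C = mm A (mm B C)"
  by (cases A rule: prod_cases4; cases B rule: prod_cases4; cases C rule: prod_cases4)
     (simp add: algebra_simps)

lemma mm_I: "mm M I2 = M" "mm I2 M = M"
  by (cases M rule: prod_cases4; simp add: I2_def)+

lemma inv2_mm: "inv2 A \<Longrightarrow> inv2 B \<Longrightarrow> inv2 (mm A B)"
  unfolding inv2_def by (metis mm_assoc mm_I)

lemma invertible2_iff: "invertible2 a b c d \<longleftrightarrow> inv2 (a,b,c,d)"
  unfolding invertible2_def inv2_def I2_def by (simp add: split_paired_Ex)

fun Mat :: "'a::ring_1 list \<Rightarrow> 'a \<times> 'a \<times> 'a \<times> 'a" where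
  "Mat [] = I2"
| "Mat (y # ys) = mm (y, -1, 1, 0) (Mat ys)"

lemma Mat_snoc: "Mat (ys @ [y]) = mm (Mat ys) (y, -1, 1, 0)"
  by (induction ys) (simp_all add: mm_I mm_assoc)

lemma inv2_F: "inv2 ((y::'a::ring_1), -1, 1, 0)"
  unfolding inv2_def I2_def by (rule exI[of _ "(0,1,-1,y)"]) simp

lemma inv2_I2: "inv2 I2"
  unfolding inv2_def using mm_I by blast

lemma inv2_Mat: "inv2 (Mat ys)"
  by (induction ys) (simp_all add: inv2_mm inv2_F inv2_I2)

definition pt :: "'a::ring_1 \<times> 'a \<times> 'a \<times> 'a \<Rightarrow> ('a \<times> 'a) set" where
  "pt M = (case M of (a,b,c,d) \<Rightarrow> cyc a b)"

definition act :: "'a::ring_1 \<times> 'a \<times> 'a \<times> 'a \<Rightarrow> ('a \<times> 'a) set \<Rightarrow> ('a \<times> 'a) set" where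
  "act N S = (case N of (n1,n2,n3,n4) \<Rightarrow> (\<lambda>(x,y). (x*n1 + y*n3, x*n2 + y*n4)) ` S)"

lemma act_cyc: "act (n1,n2,n3,n4) (cyc a b) = cyc (a*n1 + b*n3) (a*n2 + b*n4)"
  unfolding act_def cyc_def
  apply (auto simp: algebra_simps image_iff)
  subgoal for r by (rule exI[of _ "r*a"], rule exI[of _ "r*b"]) (auto simp: algebra_simps)
  done

lemma act_distant: "inv2 N \<Longrightarrow> distant p q \<Longrightarrow> distant (act N p) (act N q)"
proof -
  assume N: "inv2 N" and "distant p q"
  then obtain a b c d where pq: "p = cyc a b" "q = cyc c d" "inv2 (a,b,c,d)"
    unfolding distant_def invertible2_iff by blast
  obtain n1 n2 n3 n4 where Ne: "N = (n1,n2,n3,n4)" by (cases N rule: prod_cases4)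
  have "inv2 (mm (a,b,c,d) N)" using inv2_mm pq N by blast
  then show ?thesis unfolding distant_def invertible2_iff Ne pq act_cyc by auto
qed

lemma act_pow: "inv2 N \<Longrightarrow> (distant ^^ k) p q \<Longrightarrow> (distant ^^ k) (act N p) (act N q)"
proof (induction k arbitrary: q)
  case 0 then show ?case by simp
next
  case (Suc k)
  from Suc.prems(2) obtain r where "(distant ^^ k) p r" "distant r q" by (rule relpowp_Suc_E)
  then show ?case using Suc act_distant relpowp_Suc_I by metis
qed

definition nonK :: "'a::ring_1 \<Rightarrow> bool" where
  "nonK x \<longleftrightarrow> x \<noteq> 0 \<and> \<not> unit_R x"

fun red :: "'a::ring_1 list \<Rightarrow> bool" where
  "red [] = True"
| "red [y] = True"
| "red (y # y' # ys) = (nonK y \<and> red (y' # ys))"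

lemma red_cons: "red (x # ys) \<longleftrightarrow> (ys = [] \<or> (nonK x \<and> red ys))"
  by (cases ys) auto

lemma red_snoc: "red (xs @ [z]) \<longleftrightarrow> (\<forall>x\<in>set xs. nonK x)"
  by (induction xs) (auto simp: red_cons)

lemma red_all: "\<forall>x\<in>set xs. nonK x \<Longrightarrow> red xs"
  by (induction xs) (auto simp: red_cons)

lemma red_tl: "red (x # xs) \<Longrightarrow> red xs"
  by (cases xs) auto

locale dg =
  fixes deg :: "'a::ring_1 \<Rightarrow> nat"
  assumes df: "degree_function deg" and zo: "(0::'a) \<noteq> 1"
begin

lemma dfm: "\<forall>a b. a \<noteq> 0 \<longrightarrow> b \<noteq> 0 \<longrightarrow> a * b \<noteq> 0 \<and> deg (a * b) = deg a + deg b"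
  using df unfolding degree_function_def by (elim conjE)

lemma nzd: "(a::'a) \<noteq> 0 \<Longrightarrow> b \<noteq> 0 \<Longrightarrow> a*b \<noteq> 0"
  using dfm by blast

lemma degmult: "a \<noteq> 0 \<Longrightarrow> b \<noteq> 0 \<Longrightarrow> deg (a*b) = deg a + deg b"
  using dfm by blast

lemma degadd: "a \<noteq> 0 \<Longrightarrow> b \<noteq> 0 \<Longrightarrow> a+b \<noteq> 0 \<Longrightarrow> deg (a+b) \<le> max (deg a) (deg b)"
  using df unfolding degree_function_def by blast

lemma degunit: "a \<noteq> 0 \<Longrightarrow> deg a = 0 \<longleftrightarrow> unit_R a"
  using df unfolding degree_function_def by blast

lemma unit_nz: "unit_R (u::'a) \<Longrightarrow> u \<noteq> 0"
  using zo unfolding unit_R_def by auto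

lemma deg_unit: "unit_R u \<Longrightarrow> deg u = 0"
  using degunit unit_nz by blast

lemma unit_m1: "unit_R (-1::'a)"
  unfolding unit_R_def by (rule exI[of _ "-1"]) simp

lemma deg_uminus: "deg (-a) = deg a"
proof (cases "a = 0")
  case False
  have "-a = (-1)*a" by simp
  moreover have "(-1::'a) \<noteq> 0" using zo by (metis neg_0_equal_iff_equal)
  ultimately show ?thesis using degmult[of "-1" a] False deg_unit[OF unit_m1] by simp
qed simp

lemma deg_umult: "unit_R u \<Longrightarrow> a \<noteq> 0 \<Longrightarrow> u*a \<noteq> 0 \<and> deg (u*a) = deg a"
  using nzd[of u a] degmult[of u a] deg_unit[of u] unit_nz[of u] by simp

lemma nonK_deg: "nonK x \<Longrightarrow> x \<noteq> 0 \<and> deg x \<ge> 1"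
  unfolding nonK_def using degunit by fastforce

lemma deg_sum_gt:
  assumes "a \<noteq> 0" "b = 0 \<or> deg b < deg a"
  shows "a + b \<noteq> 0 \<and> deg (a+b) = deg a"
proof (cases "b = 0")
  case False
  then have lt: "deg b < deg a" using assms by simp
  have nz: "a + b \<noteq> 0"
  proof
    assume "a + b = 0"
    then have "a = -b" by (simp add: eq_neg_iff_add_eq_0)
    then show False using lt deg_uminus by simp
  qed
  have "deg (a+b) \<le> max (deg a) (deg b)" using degadd assms(1) False nz by blast
  moreover have "deg ((a+b) + (-b)) \<le> max (deg (a+b)) (deg (-b))"
    using degadd[of "a+b" "-b"] nz False assms(1) by (simp only: add.assoc add.right_inverse add_0_right neg_equal_0_iff_equal not_False_eq_True)
  then have "deg a \<le> max (deg (a+b)) (deg b)" unfolding deg_uminus by (simp only: add.assoc add.right_inverse add_0_right)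
  ultimately show ?thesis using nz lt deg_uminus by simp
qed (use assms in simp)

lemma deg_diff_lt:
  assumes "x = 0 \<or> deg x < D" "y = 0 \<or> deg y < D"
  shows "x - y = 0 \<or> deg (x - y) < D"
proof (cases "x = 0 \<or> y = 0")
  case True then show ?thesis using assms deg_uminus by auto
next
  case False
  then show ?thesis using degadd[of x "-y"] assms deg_uminus by fastforce
qed

lemma deg_Mat:
  assumes "\<forall>x\<in>set ys. nonK x" "Mat ys = (a,b,c,d)"
  shows "a \<noteq> 0 \<and> (b = 0 \<or> deg b < deg a)"
  using assms
proof (induction ys arbitrary: a b c d rule: rev_induct)
  case Nil then show ?case using zo by (simp add: I2_def)
next
  case (snoc y ys)
  obtain a' b' c' d' where M: "Mat ys = (a',b',c',d')" by (cases "Mat ys" rule: prod_cases4)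
  have IH: "a' \<noteq> 0 \<and> (b' = 0 \<or> deg b' < deg a')" using snoc M by simp
  have y: "y \<noteq> 0 \<and> deg y \<ge> 1" using snoc.prems nonK_deg by simp
  have e: "a = a'*y + b'" "b = -a'" using snoc.prems(2) M by (simp_all add: Mat_snoc)
  have ay: "a'*y \<noteq> 0" "deg (a'*y) = deg a' + deg y" using nzd degmult IH y by auto
  have "b' = 0 \<or> deg b' < deg (a'*y)" using IH ay y by auto
  then have "a'*y + b' \<noteq> 0 \<and> deg (a'*y + b') = deg (a'*y)" using deg_sum_gt ay by blast
  then show ?case using e ay y IH deg_uminus by auto
qed


lemma mem_cyc: "(x,y) \<in> cyc a b \<longleftrightarrow> (\<exists>r. x = r*a \<and> y = r*b)"
  unfolding cyc_def by auto

lemma self_cyc: "(a,b) \<in> cyc a b"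
  unfolding mem_cyc by (rule exI[of _ 1]) simp

lemma cyc_unit: "unit_R (u::'a) \<Longrightarrow> cyc (u*a) (u*b) = cyc a b"
proof -
  assume "unit_R u"
  then obtain v where uv: "u*v = 1" "v*u = 1" unfolding unit_R_def by blast
  show ?thesis
  proof (rule set_eqI)
    fix p :: "'a \<times> 'a"
    obtain x y where p: "p = (x,y)" by (cases p)
    have "(\<exists>r. x = r*(u*a) \<and> y = r*(u*b)) \<longleftrightarrow> (\<exists>r. x = r*a \<and> y = r*b)"
    proof
      assume "\<exists>r. x = r*(u*a) \<and> y = r*(u*b)"
      then obtain r where "x = r*(u*a)" "y = r*(u*b)" by blast
      then show "\<exists>r. x = r*a \<and> y = r*b" by (intro exI[of _ "r*u"]) (simp add: mult.assoc)
    next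
      assume "\<exists>r. x = r*a \<and> y = r*b"
      then obtain r where "x = r*a" "y = r*b" by blast
      then show "\<exists>r. x = r*(u*a) \<and> y = r*(u*b)"
        by (intro exI[of _ "r*v"]) (simp add: mult.assoc uv flip: mult.assoc[of v u])
    qed
    then show "p \<in> cyc (u*a) (u*b) \<longleftrightarrow> p \<in> cyc a b" unfolding p mem_cyc .
  qed
qed

lemma inv2_rows: "inv2 ((a::'a),b,c,d) \<Longrightarrow> (a,b) \<noteq> (0,0) \<and> (c,d) \<noteq> (0,0)"
  unfolding inv2_def I2_def using zo by (auto simp: split_paired_Ex)

lemma cyc_eq:
  assumes "cyc (a::'a) b = cyc c d" "(a,b) \<noteq> (0,0)" "(c,d) \<noteq> (0,0)"
  shows "\<exists>u. unit_R u \<and> c = u*a \<and> d = u*b"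
proof -
  have "(c,d) \<in> cyc a b" using self_cyc[of c d] assms(1) by simp
  then obtain r where r: "c = r*a" "d = r*b" unfolding mem_cyc by blast
  have "(a,b) \<in> cyc c d" using self_cyc[of a b] assms(1) by simp
  then obtain s where s: "a = s*c" "b = s*d" unfolding mem_cyc by blast
  have "(1 - s*r)*a = 0" "(1 - s*r)*b = 0" using r s by (simp_all add: algebra_simps)
  then have "1 - s*r = 0" using assms(2) nzd[of "1 - s*r" a] nzd[of "1 - s*r" b] by auto
  then have sr: "s*r = 1" by simp
  have "(1 - r*s)*c = 0" "(1 - r*s)*d = 0" using r s by (simp_all add: algebra_simps)
  then have "1 - r*s = 0" using assms(3) nzd[of "1 - r*s" c] nzd[of "1 - r*s" d] by auto
  then have rs: "r*s = 1" by simp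
  show ?thesis using r rs sr unfolding unit_R_def by blast
qed

lemma rowop:
  assumes "inv2 ((a::'a),b,c,d)" "unit_R u"
  shows "inv2 (a, b, k*a + u*c, k*b + u*d)"
proof -
  obtain v where uv: "u*v = 1" "v*u = 1" using assms(2) unfolding unit_R_def by blast
  have "inv2 ((1::'a),0,k,u)" unfolding inv2_def I2_def
    apply (rule exI[of _ "(1,0,-(v*k),v)"])
    apply (simp add: uv mult.assoc[symmetric])
    done
  then have "inv2 (mm (1,0,k,u) (a,b,c,d))" using inv2_mm assms(1) by blast
  then show ?thesis by simp
qed

lemma neighbor:
  assumes M: "inv2 ((a::'a),b,c,d)" and D: "distant (cyc a b) P"
  shows "\<exists>y. P = cyc (y*a - c) (y*b - d)"
proof -
  obtain a0 b0 c0 d0 where e: "cyc a b = cyc a0 b0" "P = cyc c0 d0" and I0: "inv2 (a0,b0,c0,d0)"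
    using D unfolding distant_def invertible2_iff by blast
  have "(a0,b0) \<in> cyc a b" using self_cyc[of a0 b0] e(1) by simp
  then obtain s where s: "a0 = s*a" "b0 = s*b" unfolding mem_cyc by blast
  have snz: "s \<noteq> 0" using inv2_rows[OF I0] s by auto
  obtain N where N: "mm (a,b,c,d) N = I2" "mm N (a,b,c,d) = I2" using M unfolding inv2_def by blast
  obtain n1 n2 n3 n4 where Ne: "N = (n1,n2,n3,n4)" by (cases N rule: prod_cases4)
  have NM: "n1*a + n2*c = 1" "n1*b + n2*d = 0" "n3*a + n4*c = 0" "n3*b + n4*d = 1"
    using N(2) unfolding Ne I2_def by simp_all
  define \<alpha> where "\<alpha> = c0*n1 + d0*n3"
  define \<beta> where "\<beta> = c0*n2 + d0*n4"
  have "\<alpha>*a + \<beta>*c = c0*(n1*a + n2*c) + d0*(n3*a + n4*c)"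
    unfolding \<alpha>_def \<beta>_def by (simp add: algebra_simps)
  then have c0: "c0 = \<alpha>*a + \<beta>*c" using NM by simp
  have "\<alpha>*b + \<beta>*d = c0*(n1*b + n2*d) + d0*(n3*b + n4*d)"
    unfolding \<alpha>_def \<beta>_def by (simp add: algebra_simps)
  then have d0: "d0 = \<alpha>*b + \<beta>*d" using NM by simp
  have "inv2 (mm (s,0,\<alpha>,\<beta>) (a,b,c,d))" using I0 s c0 d0 by simp
  moreover have "inv2 N" unfolding inv2_def using N by blast
  ultimately have "inv2 (mm (mm (s,0,\<alpha>,\<beta>) (a,b,c,d)) N)" using inv2_mm by blast
  then have "inv2 (s,0,\<alpha>,\<beta>)" unfolding mm_assoc N(1) mm_I .
  then obtain X where X: "mm (s,0,\<alpha>,\<beta>) X = I2" "mm X (s,0,\<alpha>,\<beta>) = I2" unfolding inv2_def by blast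
  obtain x1 x2 x3 x4 where Xe: "X = (x1,x2,x3,x4)" by (cases X rule: prod_cases4)
  have "s*x2 = 0" "\<alpha>*x2 + \<beta>*x4 = 1" "x4*\<beta> = 1" using X unfolding Xe I2_def by simp_all
  then have "x2 = 0" using snz nzd[of s x2] by auto
  then have bx: "\<beta>*x4 = 1" "x4*\<beta> = 1" using \<open>\<alpha>*x2 + \<beta>*x4 = 1\<close> \<open>x4*\<beta> = 1\<close> by simp_all
  have un: "unit_R (-\<beta>)" unfolding unit_R_def using bx by (intro exI[of _ "-x4"]) simp
  define y where "y = -(x4*\<alpha>)"
  have bb: "\<beta>*(x4*\<alpha>*z) = \<alpha>*z" for z
  proof -
    have "\<beta>*(x4*\<alpha>*z) = (\<beta>*x4)*\<alpha>*z" by (simp only: mult.assoc)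
    then show ?thesis using bx by simp
  qed
  have "(-\<beta>)*(y*a - c) = \<beta>*(x4*\<alpha>*a) + \<beta>*c" unfolding y_def by (simp add: algebra_simps)
  then have "c0 = (-\<beta>)*(y*a - c)" using bb c0 by simp
  moreover have "(-\<beta>)*(y*b - d) = \<beta>*(x4*\<alpha>*b) + \<beta>*d" unfolding y_def by (simp add: algebra_simps)
  then have "d0 = (-\<beta>)*(y*b - d)" using bb d0 by simp
  ultimately have "P = cyc (y*a - c) (y*b - d)" using e(2) cyc_unit[OF un] by simp
  then show ?thesis by blast
qed


lemma Mat_cons: "Mat ys = (a,b,c,d) \<Longrightarrow> Mat (y # ys) = (y*a - c, y*b - d, a, b)"
  by simp

lemma step:
  fixes ys :: "'a list"
  shows "red ys \<Longrightarrow> distant (pt (Mat ys)) P \<Longrightarrow>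
     \<exists>zs. red zs \<and> length zs \<le> Suc (length ys) \<and> P = pt (Mat zs)"
proof (induction "length ys" arbitrary: ys P rule: less_induct)
  case less
  obtain a b c d where M: "Mat ys = (a,b,c,d)" by (cases "Mat ys" rule: prod_cases4)
  have inv: "inv2 (a,b,c,d)" using inv2_Mat[of ys] M by simp
  have "distant (cyc a b) P" using less.prems(2) M by (simp add: pt_def)
  then obtain y where P: "P = cyc (y*a - c) (y*b - d)"
    using neighbor[OF inv] by blast
  have Py: "P = pt (Mat (y # ys))" using P M unfolding pt_def by simp
  show ?case
  proof (cases ys)
    case Nil
    then show ?thesis using Py by (intro exI[of _ "[y]"]) simp
  next
    case (Cons y' ys')
    show ?thesis
    proof (cases "nonK y")
      case True
      then show ?thesis using Py less.prems(1) Cons by (intro exI[of _ "y # ys"]) simp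
    next
      case False
      obtain a' b' c' d' where M': "Mat ys' = (a',b',c',d')" by (cases "Mat ys'" rule: prod_cases4)
      have e: "a = y'*a' - c'" "b = y'*b' - d'" "c = a'" "d = b'" using M M' Cons by auto
      have rys': "red ys'" using less.prems(1) Cons red_tl by blast
      show ?thesis
      proof (cases "y = 0")
        case True
        have "P = cyc ((-1)*a') ((-1)*b')" using P e True by simp
        also have "\<dots> = cyc a' b'" using cyc_unit[OF unit_m1] .
        finally have "P = pt (Mat ys')" using M' unfolding pt_def by simp
        then show ?thesis using rys' Cons by (intro exI[of _ ys']) simp
      next
        case False
        then have uy: "unit_R y" using \<open>\<not> nonK y\<close> unfolding nonK_def by simp
        then have um: "unit_R (-y)" unfolding unit_R_def
          by (auto intro: exI[of _ "- _"]) 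
        have "inv2 (a',b',c',d')" using inv2_Mat[of ys'] M' by simp
        then have "inv2 (a', b', (y*y' - 1)*a' + (-y)*c', (y*y' - 1)*b' + (-y)*d')"
          using rowop um by blast
        moreover have "y*a - c = (y*y' - 1)*a' + (-y)*c'" "y*b - d = (y*y' - 1)*b' + (-y)*d'"
          unfolding e by (simp_all add: algebra_simps)
        ultimately have "distant (pt (Mat ys')) P"
          unfolding distant_def invertible2_iff pt_def using M' P by auto
        from less.hyps[OF _ rys' this] Cons show ?thesis by auto
      qed
    qed
  qed
qed

lemma reach:
  "(distant ^^ k) (cyc (1::'a) 0) P \<Longrightarrow> \<exists>zs. red zs \<and> length zs \<le> k \<and> P = pt (Mat zs)"
proof (induction k arbitrary: P)
  case 0 then show ?case by (intro exI[of _ "[]"]) (simp add: pt_def I2_def)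
next
  case (Suc k)
  from Suc.prems obtain Q where "(distant ^^ k) (cyc 1 0) Q" "distant Q P" by (rule relpowp_Suc_E)
  then obtain zs where "red zs" "length zs \<le> k" "Q = pt (Mat zs)" using Suc.IH by blast
  then show ?case using step \<open>distant Q P\<close> by (metis Suc_le_mono le_trans)
qed

lemma forward: "(distant ^^ length ys) (cyc 1 0) (pt (Mat (ys::'a list)))"
proof (induction ys)
  case Nil then show ?case by (simp add: pt_def I2_def)
next
  case (Cons y ys)
  obtain a b c d where M: "Mat ys = (a,b,c,d)" by (cases "Mat ys" rule: prod_cases4)
  have "inv2 (a,b,c,d)" using inv2_Mat[of ys] M by simp
  then have "inv2 (a,b,y*a + (-1)*c, y*b + (-1)*d)" using rowop[OF _ unit_m1] by blast
  then have "distant (pt (Mat ys)) (pt (Mat (y#ys)))"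
    unfolding distant_def invertible2_iff pt_def using M by auto
  then show ?case using Cons relpowp_Suc_I by fastforce
qed

lemma uniq:
  fixes t :: 'a
  assumes t: "nonK t"
  shows "red zs \<Longrightarrow> unit_R u \<Longrightarrow> Mat zs = (z1,z2,z3,z4) \<Longrightarrow>
    Mat (replicate m t) = (w1,w2,w3,w4) \<Longrightarrow> z1 = u*w1 \<Longrightarrow> z2 = u*w2 \<Longrightarrow> m \<le> length zs"
proof (induction m arbitrary: zs z1 z2 z3 z4 w1 w2 w3 w4)
  case 0 then show ?case by simp
next
  case (Suc m)
  obtain A B C D where W: "Mat (replicate m t) = (A,B,C,D)" by (cases "Mat (replicate m t)" rule: prod_cases4)
  have rep: "replicate (Suc m) t = replicate m t @ [t]" by (simp add: replicate_append_same)
  have w: "w1 = A*t + B" "w2 = -A" using Suc.prems(4) W unfolding rep Mat_snoc by simp_all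
  have dA: "A \<noteq> 0 \<and> (B = 0 \<or> deg B < deg A)" using deg_Mat[OF _ W] t by simp
  have u: "u \<noteq> 0" using unit_nz Suc.prems(2) .
  show ?case
  proof (cases zs rule: rev_exhaust)
    case Nil
    then have "z2 = 0" using Suc.prems(3) by (simp add: I2_def)
    then have "u*A = 0" using Suc.prems(6) w by simp
    then show ?thesis using nzd u dA by blast
  next
    case (snoc xs z)
    have xsK: "\<forall>x\<in>set xs. nonK x" using Suc.prems(1) snoc red_snoc by blast
    obtain \<alpha> \<beta> \<gamma> \<delta> where X: "Mat xs = (\<alpha>,\<beta>,\<gamma>,\<delta>)" by (cases "Mat xs" rule: prod_cases4)
    have z: "z1 = \<alpha>*z + \<beta>" "z2 = -\<alpha>" using Suc.prems(3) X unfolding snoc Mat_snoc by simp_all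
    have al: "\<alpha> = u*A" using z(2) Suc.prems(6) w by simp
    have dX: "\<alpha> \<noteq> 0 \<and> (\<beta> = 0 \<or> deg \<beta> < deg \<alpha>)" using deg_Mat[OF xsK X] .
    have uA: "u*A \<noteq> 0 \<and> deg (u*A) = deg A" using deg_umult Suc.prems(2) dA by blast
    have "u*A*z + \<beta> = u*A*t + u*B" using z(1) Suc.prems(5) w al by (simp add: algebra_simps)
    then have key: "(u*A)*(z - t) = u*B - \<beta>" by (simp add: algebra_simps)
    have r1: "u*B = 0 \<or> deg (u*B) < deg A"
      using dA deg_umult[OF Suc.prems(2), of B] by (cases "B = 0") auto
    have r2: "\<beta> = 0 \<or> deg \<beta> < deg A" using dX al uA by simp
    have zt: "z = t"
    proof (rule ccontr)
      assume "z \<noteq> t"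
      then have "z - t \<noteq> 0" by simp
      then have "(u*A)*(z - t) \<noteq> 0" "deg ((u*A)*(z - t)) = deg A + deg (z - t)"
        using nzd degmult uA by auto
      moreover have "u*B - \<beta> = 0 \<or> deg (u*B - \<beta>) < deg A" using deg_diff_lt[OF r1 r2] .
      ultimately show False using key by auto
    qed
    then have "\<beta> = u*B" using key by simp
    then have "m \<le> length xs"
      using Suc.IH[OF red_all[OF xsK] Suc.prems(2) X W] al by simp
    then show ?thesis using snoc by simp
  qed
qed

end


lemma act_back:
  assumes "mm (a,b,c,d) (n1,n2,n3,n4) = I2"
  shows "act (n1,n2,n3,n4) (act (a,b,c,d) (cyc x y)) = cyc x y"
proof -
  have e: "a*n1 + b*n3 = 1" "a*n2 + b*n4 = 0" "c*n1 + d*n3 = 0" "c*n2 + d*n4 = 1"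
    using assms by (simp_all add: I2_def)
  have "(x*a + y*c)*n1 + (x*b + y*d)*n3 = x*(a*n1 + b*n3) + y*(c*n1 + d*n3)"
    by (simp add: algebra_simps)
  moreover have "(x*a + y*c)*n2 + (x*b + y*d)*n4 = x*(a*n2 + b*n4) + y*(c*n2 + d*n4)"
    by (simp add: algebra_simps)
  ultimately show ?thesis unfolding act_cyc using e by simp
qed

theorem mainTheorem11:
  fixes deg :: "'a::ring_1 \<Rightarrow> nat"
  assumes "K_ring_with_degree deg"
    and "(K_set :: 'a set) \<noteq> UNIV"
  shows "\<forall>C \<in> (components :: ('a \<times> 'a) set set set). \<forall>n::nat.
           \<exists>p\<in>C. \<exists>q\<in>C. \<not> (\<exists>k\<le>n. (distant ^^ k) p q)"
proof (intro ballI allI)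
  interpret dg deg
    using assms(1) unfolding K_ring_with_degree_def K_is_field_def by unfold_locales auto
  obtain t :: 'a where "t \<notin> K_set" using assms(2) by blast
  then have t: "nonK t" unfolding K_set_def nonK_def by auto
  fix C :: "('a \<times> 'a) set set" and n :: nat
  assume "C \<in> components"
  then obtain p where C: "C = {q. distant\<^sup>*\<^sup>* p q}" and "p \<in> proj_line"
    unfolding components_def by blast
  then obtain a b where p: "p = cyc a b" and "admissible a b" unfolding proj_line_def by blast
  then obtain c d where "invertible2 a b c d" unfolding admissible_def by blast
  then have M: "inv2 (a,b,c,d)" unfolding invertible2_iff .
  then obtain N where N: "mm (a,b,c,d) N = I2" "mm N (a,b,c,d) = I2" unfolding inv2_def by blast
  obtain n1 n2 n3 n4 where Ne: "N = (n1,n2,n3,n4)" by (cases N rule: prod_cases4)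
  have invN: "inv2 N" unfolding inv2_def using N by blast
  obtain w1 w2 w3 w4 where W: "Mat (replicate (Suc n) t) = (w1,w2,w3,w4)"
    by (cases "Mat (replicate (Suc n) t)" rule: prod_cases4)
  define q where "q = act (a,b,c,d) (cyc w1 w2)"
  have "(distant ^^ Suc n) (cyc 1 0) (cyc w1 w2)"
    using forward[of "replicate (Suc n) t"] W unfolding pt_def by simp
  then have "(distant ^^ Suc n) (act (a,b,c,d) (cyc 1 0)) q"
    unfolding q_def using act_pow M by blast
  moreover have "act (a,b,c,d) (cyc 1 0) = p" unfolding p act_cyc by simp
  ultimately have "distant\<^sup>*\<^sup>* p q" using relpowp_imp_rtranclp by metis
  then have qC: "q \<in> C" unfolding C by simp
  have pC: "p \<in> C" unfolding C by simp
  have "\<not> (\<exists>k\<le>n. (distant ^^ k) p q)"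
  proof
    assume "\<exists>k\<le>n. (distant ^^ k) p q"
    then obtain k where k: "k \<le> n" "(distant ^^ k) p q" by blast
    then have "(distant ^^ k) (act N p) (act N q)" using act_pow invN by blast
    moreover have "act N p = cyc 1 0"
      using N(1) unfolding Ne p act_cyc by (simp add: I2_def)
    moreover have "act N q = cyc w1 w2" unfolding q_def Ne using act_back N(1) Ne by simp
    ultimately have "(distant ^^ k) (cyc 1 0) (cyc w1 w2)" by simp
    then obtain zs where zs: "red zs" "length zs \<le> k" "cyc w1 w2 = pt (Mat zs)"
      using reach by blast
    obtain z1 z2 z3 z4 where Z: "Mat zs = (z1,z2,z3,z4)" by (cases "Mat zs" rule: prod_cases4)
    have "cyc w1 w2 = cyc z1 z2" using zs(3) Z unfolding pt_def by simp
    moreover have "(w1,w2) \<noteq> (0,0)" using inv2_rows inv2_Mat[of "replicate (Suc n) t"] W by metis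
    moreover have "(z1,z2) \<noteq> (0,0)" using inv2_rows inv2_Mat[of zs] Z by metis
    ultimately obtain u where "unit_R u" "z1 = u*w1" "z2 = u*w2" using cyc_eq by blast
    then have "Suc n \<le> length zs" using uniq[OF t zs(1) _ Z W] by blast
    then show False using zs(2) k(1) by simp
  qed
  then show "\<exists>p\<in>C. \<exists>q\<in>C. \<not> (\<exists>k\<le>n. (distant ^^ k) p q)" using pC qC by blast
qed

end
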